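(* Let $\mathcal{R}$ be a left-linear TRS, $\mathcal{R}_1,\mathcal{R}_2,\mathcal{C}\subseteq\mathcal{R}$, and $\mathcal{P}=\mathsf{PCPS}(\mathcal{R},\mathcal{C})$. Suppose every parallel critical pair $(t,u)$ between $\mathcal{R}$ and $\mathcal{R}$ satisfies $t\to_\mathcal{R}^*\cdot{}_\mathcal{R}\!\!\leftarrow^* u$. If $t\;{}_{\mathcal{R}_1}\!\Leftarrow s\Rightarrow_{\mathcal{R}_2}u$, then (i) $t\Rightarrow_{\mathcal{R}_2}\cdot\leftrightarrow^*_\mathcal{C}\cdot{}_{\mathcal{R}_1}\!\Leftarrow u$, or (ii) there exist $t',u'$ with $t\;{}_{\mathcal{R}_1}\!\Leftarrow t'\;{}_\mathcal{P}\!\!\leftarrow s\to_\mathcal{P} u'\Rightarrow_{\mathcal{R}_2}u$ and $t'\to_\mathcal{R}^*\cdot{}_\mathcal{R}\!\!\leftarrow^*u'$.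
   Context: A TRS is a set of rules $\ell\to r$ ($\ell\notin\mathcal{V}$, $\mathcal{V}ar(r)\subseteq\mathcal{V}ar(\ell)$); left-linear: no variable repeated in a left-hand side. Parallel step: $s\Rightarrow_\mathcal{R}t$ iff for some set $P$ of pairwise parallel positions of $s$ (no one a prefix of another), for each $p\in P$ there are $\ell\to r\in\mathcal{R}$, $\mu$ with $s|_p=\ell\mu$, $t|_p=r\mu$, and $t=s[t|_p]_{p\in P}$; $\Leftarrow$ is its inverse. $\leftrightarrow^*_\mathcal{C}$ is the conversion relation of $\mathcal{C}$. Parallel critical peak between $\mathcal{R}$ and $\mathcal{S}$: for a variant $\ell\to r$ of an $\mathcal{S}$-rule, a non-empty set $P$ of pairwise parallel function-symbol positions of $\ell$, variants $\ell_p\to r_p$ ($p\in P$) of $\mathcal{R}$-rules, all pairwise variable-disjoint, $\sigma$ a most general unifier of $\{\ell_p\approx\ell|_p\}_{p\in P}$, and $\ell_\epsilon\to r_\epsilon$ not a variant of $\ell\to r$ if $P=\{\epsilon\}$ (root): the peak $t\;{}_\mathcal{R}\!\Leftarrow s\xrightarrow{\epsilon}_\mathcal{S}u$ with $s=\ell\sigma$, $t=(\ell\sigma)[r_p\sigma]_{p\in P}$, $u=r\sigma$; $(t,u)$ is a parallel critical pair. $\mathsf{PCPS}(\mathcal{R},\mathcal{C})$ is the TRS $\{s\to t,\ s\to u\mid t\;{}_\mathcal{R}\!\Leftarrow s\xrightarrow{\epsilon}_\mathcal{R}u$ is a parallel critical peak between $\mathcal{R}$ and $\mathcal{R}$ and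 $t\leftrightarrow^*_\mathcal{C}u$ does not hold$\}$. *)

theory Defs
  imports Main
begin

datatype ('f, 'v) "term" = Var 'v | Fun 'f "('f, 'v) term list"

type_synonym ('f, 'v) rule = "('f, 'v) term \<times> ('f, 'v) term"
type_synonym ('f, 'v) trs = "('f, 'v) rule set"
type_synonym pos = "nat list"

fun vars :: "('f, 'v) term \<Rightarrow> 'v set" where
  "vars (Var x) = {x}"
| "vars (Fun f ts) = (\<Union>t \<in> set ts. vars t)"

definition vars_rule :: "('f, 'v) rule \<Rightarrow> 'v set" where
  "vars_rule lr = vars (fst lr) \<union> vars (snd lr)"

fun subst_apply :: "('f, 'v) term \<Rightarrow> ('v \<Rightarrow> ('f, 'v) term) \<Rightarrow> ('f, 'v) term" (infixl "\<cdot>" 67) where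
  "Var x \<cdot> \<sigma> = \<sigma> x"
| "Fun f ts \<cdot> \<sigma> = Fun f (map (\<lambda>t. t \<cdot> \<sigma>) ts)"

lemma size_zip_term_simp [termination_simp]:
  "(a, b) \<in> set (zip xs ts) \<Longrightarrow> size b < Suc (size_list size ts)"
  by (meson less_Suc_eq_le set_zip_rightD size_list_estimation' order_refl)

lemma size_nth_term_simp [termination_simp]:
  "i < length ts \<Longrightarrow> size (ts ! i) < Suc (size_list size ts)"
  by (meson less_Suc_eq_le nth_mem size_list_estimation' order_refl)

fun poss :: "('f, 'v) term \<Rightarrow> pos set" where
  "poss (Var x) = {[]}"
| "poss (Fun f ts) = insert [] (\<Union>(i, t) \<in> set (zip [0..<length ts] ts). (Cons i) ` poss t)"

text \<open>Subterm at a position (meaningful for positions in poss).\<close>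
fun subt_at :: "('f, 'v) term \<Rightarrow> pos \<Rightarrow> ('f, 'v) term" (infixl "|'_" 67) where
  "subt_at t [] = t"
| "subt_at (Var x) (i # p) = Var x"
| "subt_at (Fun f ts) (i # p) = (if i < length ts then subt_at (ts ! i) p else Fun f ts)"

fun replace_at :: "('f, 'v) term \<Rightarrow> pos \<Rightarrow> ('f, 'v) term \<Rightarrow> ('f, 'v) term" where
  "replace_at s [] u = u"
| "replace_at (Var x) (i # p) u = Var x"
| "replace_at (Fun f ts) (i # p) u =
     (if i < length ts then Fun f (ts[i := replace_at (ts ! i) p u]) else Fun f ts)"

text \<open>Simultaneous replacement \<open>s[u_p]_{p \<in> P}\<close> at pairwise parallel positions,
  given by a list of (position, term) pairs (order irrelevant for parallel positions).\<close>
definition replace_all :: "('f, 'v) term \<Rightarrow> (pos \<times> ('f, 'v) term) list \<Rightarrow> ('f, 'v) term" where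
  "replace_all s pus = foldr (\<lambda>(p, u) t. replace_at t p u) pus s"

definition fun_poss :: "('f, 'v) term \<Rightarrow> pos set" where
  "fun_poss t = {p \<in> poss t. \<not> (\<exists>x. t |_ p = Var x)}"

definition parallel_pos :: "pos \<Rightarrow> pos \<Rightarrow> bool" where
  "parallel_pos p q \<longleftrightarrow> \<not> (\<exists>r. q = p @ r) \<and> \<not> (\<exists>r. p = q @ r)"

definition pairwise_parallel :: "pos list \<Rightarrow> bool" where
  "pairwise_parallel ps \<longleftrightarrow>
     (\<forall>i j. i < length ps \<and> j < length ps \<and> i \<noteq> j \<longrightarrow> parallel_pos (ps ! i) (ps ! j))"

definition wf_trs :: "('f, 'v) trs \<Rightarrow> bool" where
  "wf_trs R \<longleftrightarrow> (\<forall>(l, r) \<in> R. (\<forall>x. l \<noteq> Var x) \<and> vars r \<subseteq> vars l)"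

fun linear_term :: "('f, 'v) term \<Rightarrow> bool" where
  "linear_term (Var x) = True"
| "linear_term (Fun f ts) =
     ((\<forall>t \<in> set ts. linear_term t) \<and>
      (\<forall>i j. i < length ts \<and> j < length ts \<and> i \<noteq> j \<longrightarrow> vars (ts ! i) \<inter> vars (ts ! j) = {}))"

definition left_linear :: "('f, 'v) trs \<Rightarrow> bool" where
  "left_linear R \<longleftrightarrow> (\<forall>(l, r) \<in> R. linear_term l)"

definition rstep :: "('f, 'v) trs \<Rightarrow> ('f, 'v) term rel" where
  "rstep R = {(s, t). \<exists>p l r \<sigma>. (l, r) \<in> R \<and> p \<in> poss s \<and> s |_ p = l \<cdot> \<sigma> \<and> t = replace_at s p (r \<cdot> \<sigma>)}"

text \<open>Parallel step \<open>\<Rightarrow>_R\<close>: a (finite, duplicate-free) enumeration \<open>ps\<close> of a set \<open>P\<close> of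
  pairwise parallel positions of \<open>s\<close>.\<close>
definition par_step :: "('f, 'v) trs \<Rightarrow> ('f, 'v) term rel" where
  "par_step R = {(s, t). \<exists>ps. distinct ps \<and> set ps \<subseteq> poss s \<and> pairwise_parallel ps \<and>
      (\<forall>p \<in> set ps. \<exists>l r \<mu>. (l, r) \<in> R \<and> s |_ p = l \<cdot> \<mu> \<and> t |_ p = r \<cdot> \<mu>) \<and>
      t = replace_all s (map (\<lambda>p. (p, t |_ p)) ps)}"

definition conv :: "('f, 'v) trs \<Rightarrow> ('f, 'v) term rel" where
  "conv C = (rstep C \<union> (rstep C)\<inverse>)\<^sup>*"

definition join :: "('f, 'v) trs \<Rightarrow> ('f, 'v) term rel" where
  "join R = (rstep R)\<^sup>* O ((rstep R)\<^sup>*)\<inverse>"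

definition is_variant :: "('f, 'v) rule \<Rightarrow> ('f, 'v) rule \<Rightarrow> bool" where
  "is_variant lr' lr \<longleftrightarrow> (\<exists>\<pi>. bij \<pi> \<and>
      fst lr' = fst lr \<cdot> (Var \<circ> \<pi>) \<and> snd lr' = snd lr \<cdot> (Var \<circ> \<pi>))"

definition variant_of :: "('f, 'v) rule \<Rightarrow> ('f, 'v) trs \<Rightarrow> bool" where
  "variant_of lr' R \<longleftrightarrow> (\<exists>lr \<in> R. is_variant lr' lr)"

definition subst_compose :: "('v \<Rightarrow> ('f, 'v) term) \<Rightarrow> ('v \<Rightarrow> ('f, 'v) term) \<Rightarrow> ('v \<Rightarrow> ('f, 'v) term)" where
  "subst_compose \<sigma> \<delta> = (\<lambda>x. \<sigma> x \<cdot> \<delta>)"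

definition is_unifier :: "('v \<Rightarrow> ('f, 'v) term) \<Rightarrow> (('f, 'v) term \<times> ('f, 'v) term) set \<Rightarrow> bool" where
  "is_unifier \<sigma> E \<longleftrightarrow> (\<forall>(a, b) \<in> E. a \<cdot> \<sigma> = b \<cdot> \<sigma>)"

definition is_mgu :: "('v \<Rightarrow> ('f, 'v) term) \<Rightarrow> (('f, 'v) term \<times> ('f, 'v) term) set \<Rightarrow> bool" where
  "is_mgu \<sigma> E \<longleftrightarrow> is_unifier \<sigma> E \<and> (\<forall>\<tau>. is_unifier \<tau> E \<longrightarrow> (\<exists>\<delta>. \<tau> = subst_compose \<sigma> \<delta>))"

text \<open>\<open>par_crit_peak R S s t u\<close>: \<open>t _R\<Leftarrow> s \<rightarrow>^\<epsilon>_S u\<close> is a parallel critical peak between R and S.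
  The nonempty set P is enumerated by the duplicate-free list \<open>ps\<close>; \<open>lrs p\<close> is the R-rule variant at \<open>p\<close>.\<close>
definition par_crit_peak ::
  "('f, 'v) trs \<Rightarrow> ('f, 'v) trs \<Rightarrow> ('f, 'v) term \<Rightarrow> ('f, 'v) term \<Rightarrow> ('f, 'v) term \<Rightarrow> bool" where
  "par_crit_peak R S s t u \<longleftrightarrow>
    (\<exists>l r ps lrs \<sigma>.
       variant_of (l, r) S \<and>
       ps \<noteq> [] \<and> distinct ps \<and> set ps \<subseteq> fun_poss l \<and> pairwise_parallel ps \<and>
       (\<forall>p \<in> set ps. variant_of (lrs p) R) \<and>
       (\<forall>p \<in> set ps. vars_rule (lrs p) \<inter> vars_rule (l, r) = {}) \<and>
       (\<forall>p \<in> set ps. \<forall>q \<in> set ps. p \<noteq> q \<longrightarrow> vars_rule (lrs p) \<inter> vars_rule (lrs q) = {}) \<and>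
       is_mgu \<sigma> {(fst (lrs p), l |_ p) | p. p \<in> set ps} \<and>
       (ps = [[]] \<longrightarrow> \<not> is_variant (lrs []) (l, r)) \<and>
       s = l \<cdot> \<sigma> \<and>
       t = replace_all (l \<cdot> \<sigma>) (map (\<lambda>p. (p, snd (lrs p) \<cdot> \<sigma>)) ps) \<and>
       u = r \<cdot> \<sigma>)"

definition PCPS :: "('f, 'v) trs \<Rightarrow> ('f, 'v) trs \<Rightarrow> ('f, 'v) trs" where
  "PCPS R C = {(s, v) | s v. \<exists>t u. par_crit_peak R R s t u \<and> (t, u) \<notin> conv C \<and> (v = t \<or> v = u)}"

end

theory Submission imports Defs "HOL-Library.Countable_Set" begin


lemma subst_apply_comp: "t \<cdot> \<sigma> \<cdot> \<tau> = t \<cdot> subst_compose \<sigma> \<tau>"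
  by (induction t) (auto simp: subst_compose_def)

lemma term_subst_eq: "(\<And>x. x \<in> vars t \<Longrightarrow> \<sigma> x = \<tau> x) \<Longrightarrow> t \<cdot> \<sigma> = t \<cdot> \<tau>"
  by (induction t) auto

lemma term_subst_eq_rev: "t \<cdot> \<sigma> = t \<cdot> \<tau> \<Longrightarrow> x \<in> vars t \<Longrightarrow> \<sigma> x = \<tau> x"
  by (induction t) auto

lemma subst_Var_id[simp]: "t \<cdot> Var = t"
  by (induction t) (auto simp: map_idI)

lemma vars_subst: "vars (t \<cdot> \<sigma>) = (\<Union>x \<in> vars t. vars (\<sigma> x))"
  by (induction t) auto

lemma vars_rename: "vars (t \<cdot> (Var \<circ> \<pi>)) = \<pi> ` vars t"
  by (auto simp add: vars_subst) 

lemma vars_rename'[simp]: "vars (t \<cdot> (\<lambda>a. Var (\<pi> a))) = \<pi> ` vars t"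
  using vars_rename[of t \<pi>] by (simp add: comp_def)

lemma linear_rename: "inj \<pi> \<Longrightarrow> linear_term t \<Longrightarrow> linear_term (t \<cdot> (Var \<circ> \<pi>))"
proof (induction t)
  case (Var x) then show ?case by simp
next
  case (Fun f ts)
  have "\<forall>i j. i < length ts \<and> j < length ts \<and> i \<noteq> j \<longrightarrow> \<pi> ` vars (ts ! i) \<inter> \<pi> ` vars (ts ! j) = {}"
    using Fun.prems by (auto simp: image_Int[symmetric])
  then show ?case using Fun by (auto simp: vars_rename)
qed

lemma poss_Nil[simp]: "[] \<in> poss t"
  by (cases t) auto

lemma poss_Fun_Cons[simp]: "(i # q \<in> poss (Fun f ts)) = (i < length ts \<and> q \<in> poss (ts ! i))"
proof
  assume "i # q \<in> poss (Fun f ts)"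
  then obtain k where "k < length ts" "i = k" "q \<in> poss (ts ! k)"
    by (auto simp: set_zip)
  then show "i < length ts \<and> q \<in> poss (ts ! i)" by simp
next
  assume a: "i < length ts \<and> q \<in> poss (ts ! i)"
  then have "(i, ts ! i) \<in> set (zip [0..<length ts] ts)" unfolding in_set_zip by (intro exI[of _ i]) auto
  then show "i # q \<in> poss (Fun f ts)" using a by force
qed

declare poss.simps(2)[simp del]

lemma poss_Fun_cases: "p \<in> poss (Fun f ts) \<Longrightarrow> p = [] \<or> (\<exists>i q. p = i # q \<and> i < length ts \<and> q \<in> poss (ts ! i))"
  by (cases p) auto

lemma poss_Var_Cons[simp]: "i # q \<notin> poss (Var x)"
  by simp

lemma fun_poss_Fun_Cons[simp]: "(i # q \<in> fun_poss (Fun f ts)) = (i < length ts \<and> q \<in> fun_poss (ts ! i))"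
  by (auto simp: fun_poss_def)

lemma fun_poss_Nil_Fun[simp]: "[] \<in> fun_poss (Fun f ts)"
  by (auto simp: fun_poss_def)

lemma fun_poss_Var[simp]: "fun_poss (Var x) = {}"
  by (auto simp: fun_poss_def)

lemma fun_poss_poss: "p \<in> fun_poss t \<Longrightarrow> p \<in> poss t"
  by (auto simp: fun_poss_def)

lemma vars_subt_at: "p \<in> poss t \<Longrightarrow> vars (t |_ p) \<subseteq> vars t"
proof (induction t arbitrary: p)
  case (Var x) then show ?case by auto
next
  case (Fun f ts) then show ?case
    by (cases p) (auto, meson nth_mem subsetD)
qed

lemma linear_subt_at: "p \<in> poss t \<Longrightarrow> linear_term t \<Longrightarrow> linear_term (t |_ p)"
proof (induction t arbitrary: p)
  case (Var x) then show ?case by auto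
next
  case (Fun f ts) then show ?case
    by (cases p) auto
qed

lemma parallel_Cons: "parallel_pos (i # p) (j # q) = (i \<noteq> j \<or> parallel_pos p q)"
  by (auto simp: parallel_pos_def)

lemma parallel_Nil1[simp]: "\<not> parallel_pos [] q" and parallel_Nil2[simp]: "\<not> parallel_pos p []"
  by (auto simp: parallel_pos_def)

lemma parallel_sym: "parallel_pos p q \<Longrightarrow> parallel_pos q p"
  by (auto simp: parallel_pos_def)

lemma linear_parallel_vars:
  "linear_term t \<Longrightarrow> p \<in> poss t \<Longrightarrow> q \<in> poss t \<Longrightarrow> parallel_pos p q \<Longrightarrow>
   vars (t |_ p) \<inter> vars (t |_ q) = {}"
proof (induction t arbitrary: p q)
  case (Var x) then show ?case by auto
next
  case (Fun f ts)
  obtain i p' where p: "p = i # p'" using Fun by (cases p) auto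
  obtain j q' where q: "q = j # q'" using Fun by (cases q) auto
  show ?case
  proof (cases "i = j")
    case True then show ?thesis using Fun p q by (auto simp: parallel_Cons)
  next
    case False
    have pi: "i < length ts" "p' \<in> poss (ts ! i)" "j < length ts" "q' \<in> poss (ts ! j)"
      using Fun.prems p q by auto
    have "vars (ts ! i |_ p') \<subseteq> vars (ts ! i)" "vars (ts ! j |_ q') \<subseteq> vars (ts ! j)"
      using vars_subt_at pi by auto
    moreover have "vars (ts ! i) \<inter> vars (ts ! j) = {}" using Fun p q False by auto
    moreover have "Fun f ts |_ p = ts ! i |_ p'" "Fun f ts |_ q = ts ! j |_ q'" using p q Fun by auto
    ultimately show ?thesis by auto
  qed
qed

lemma poss_subst: "p \<in> poss t \<Longrightarrow> p \<in> poss (t \<cdot> \<sigma>)"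
proof (induction t arbitrary: p)
  case (Var x) then show ?case by auto
next
  case (Fun f ts) then show ?case by (cases p) auto
qed

lemma subt_at_subst: "p \<in> poss t \<Longrightarrow> (t \<cdot> \<sigma>) |_ p = (t |_ p) \<cdot> \<sigma>"
proof (induction t arbitrary: p)
  case (Var x) then show ?case by auto
next
  case (Fun f ts) then show ?case by (cases p) auto
qed

lemma replace_at_subst: "p \<in> poss t \<Longrightarrow> (replace_at t p u) \<cdot> \<sigma> = replace_at (t \<cdot> \<sigma>) p (u \<cdot> \<sigma>)"
proof (induction t arbitrary: p)
  case (Var x) then show ?case by auto
next
  case (Fun f ts)
  show ?case
  proof (cases p)
    case Nil then show ?thesis by simp
  next
    case (Cons i q)
    then have i: "i < length ts" and q: "q \<in> poss (ts ! i)" using Fun.prems by auto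
    have IH: "replace_at (ts ! i) q u \<cdot> \<sigma> = replace_at (ts ! i \<cdot> \<sigma>) q (u \<cdot> \<sigma>)"
      using Fun.IH[OF nth_mem[OF i] q] .
    show ?thesis using i IH Cons by (simp add: map_update)
  qed
qed

lemma poss_replace_at_parallel:
  "p \<in> poss s \<Longrightarrow> parallel_pos p q \<Longrightarrow> p \<in> poss (replace_at s q u)"
proof (induction s arbitrary: p q)
  case (Var x) then show ?case by (cases p) auto
next
  case (Fun f ts)
  obtain i p' where p: "p = i # p'" using Fun by (cases p) auto
  obtain j q' where q: "q = j # q'" using Fun by (cases q) auto
  have i: "i < length ts" and p': "p' \<in> poss (ts ! i)" using Fun.prems p by auto
  show ?case
  proof (cases "j < length ts")
    case False then show ?thesis using Fun.prems q by simp
  next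
    case True
    show ?thesis
    proof (cases "i = j")
      case True
      then have "parallel_pos p' q'" using Fun.prems p q by (simp add: parallel_Cons)
      then have "p' \<in> poss (replace_at (ts ! i) q' u)" using Fun.IH[OF nth_mem[OF i] p'] by blast
      then show ?thesis using p q True i by simp
    next
      case False
      then show ?thesis using p q i p' \<open>j < length ts\<close> by simp
    qed
  qed
qed

lemma pairwise_parallel_set:
  "distinct ps \<Longrightarrow> pairwise_parallel ps \<longleftrightarrow> (\<forall>p \<in> set ps. \<forall>q \<in> set ps. p \<noteq> q \<longrightarrow> parallel_pos p q)"
  unfolding pairwise_parallel_def
  by (metis distinct_Ex1 in_set_conv_nth nth_eq_iff_index_eq)

lemma replace_all_Nil[simp]: "replace_all s [] = s"
  by (simp add: replace_all_def)

lemma replace_all_Cons[simp]: "replace_all s ((p, u) # pus) = replace_at (replace_all s pus) p u"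
  by (simp add: replace_all_def)

lemma poss_replace_all_parallel:
  "p \<in> poss s \<Longrightarrow> (\<forall>q \<in> set qs. parallel_pos p q) \<Longrightarrow> p \<in> poss (replace_all s (map (\<lambda>q. (q, g q)) qs))"
  by (induction qs) (auto intro: poss_replace_at_parallel)

lemma replace_all_subst:
  "distinct ps \<Longrightarrow> set ps \<subseteq> poss s \<Longrightarrow> pairwise_parallel ps \<Longrightarrow>
   (replace_all s (map (\<lambda>p. (p, g p)) ps)) \<cdot> \<tau> = replace_all (s \<cdot> \<tau>) (map (\<lambda>p. (p, g p \<cdot> \<tau>)) ps)"
proof (induction ps)
  case Nil then show ?case by simp
next
  case (Cons p ps)
  have pp: "pairwise_parallel ps" using Cons(2,4) by (auto simp: pairwise_parallel_set)
  have "p \<in> poss (replace_all s (map (\<lambda>q. (q, g q)) ps))"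
    using Cons(2,3,4) by (intro poss_replace_all_parallel) (auto simp: pairwise_parallel_set)
  then show ?case using Cons pp by (simp add: replace_at_subst)
qed




inductive par :: "('f, 'v) trs \<Rightarrow> ('f, 'v) term \<Rightarrow> ('f, 'v) term \<Rightarrow> bool" for R where
  par_var: "par R (Var x) (Var x)"
| par_rule: "(l, r) \<in> R \<Longrightarrow> par R (l \<cdot> \<mu>) (r \<cdot> \<mu>)"
| par_fun: "length ss = length ts \<Longrightarrow> (\<And>i. i < length ts \<Longrightarrow> par R (ss ! i) (ts ! i)) \<Longrightarrow> par R (Fun f ss) (Fun f ts)"

lemma par_refl: "par R t t"
  by (induction t) (auto intro!: par.intros)

lemma par_subst: "(\<And>x. x \<in> vars t \<Longrightarrow> par R (\<sigma> x) (\<tau> x)) \<Longrightarrow> par R (t \<cdot> \<sigma>) (t \<cdot> \<tau>)"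
proof (induction t)
  case (Var x) then show ?case by simp
next
  case (Fun f ts)
  have "par R (ts ! i \<cdot> \<sigma>) (ts ! i \<cdot> \<tau>)" if i: "i < length ts" for i
  proof (rule Fun.IH)
    show "ts ! i \<in> set ts" using i by simp
    fix x assume "x \<in> vars (ts ! i)"
    then have "x \<in> vars (Fun f ts)" using i by (auto intro: nth_mem)
    then show "par R (\<sigma> x) (\<tau> x)" by (rule Fun.prems)
  qed
  then show ?case by (auto intro!: par_fun)
qed

lemma par_mono: "par R s t \<Longrightarrow> R \<subseteq> S \<Longrightarrow> par S s t"
  by (induction rule: par.induct) (auto intro: par.intros)

primrec sel :: "nat \<Rightarrow> pos list \<Rightarrow> pos list" where
  "sel i [] = []"
| "sel i (p # ps) = (case p of [] \<Rightarrow> sel i ps | j # q \<Rightarrow> if j = i then q # sel i ps else sel i ps)"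

lemma set_sel[simp]: "set (sel i ps) = {q. i # q \<in> set ps}"
  by (induction ps) (auto split: list.splits)

lemma distinct_sel: "distinct ps \<Longrightarrow> distinct (sel i ps)"
  by (induction ps) (auto split: list.splits)

lemma sel_append[simp]: "sel i (xs @ ys) = sel i xs @ sel i ys"
  by (induction xs) (auto split: list.splits)

lemma sel_map_Cons[simp]: "sel i (map (Cons j) qs) = (if i = j then qs else [])"
  by (induction qs) auto

lemma sel_concat: "sel i (concat (map (\<lambda>j. map (Cons j) (PS j)) [0..<n])) = (if i < n then PS i else [])"
  by (induction n) auto

lemma distinct_concat_Cons:
  "(\<And>i. i < n \<Longrightarrow> distinct (PS i)) \<Longrightarrow> distinct (concat (map (\<lambda>j. map (Cons j) (PS j)) [0..<n]))"
  by (induction n) (auto simp: distinct_map)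

lemma set_concat_Cons:
  "set (concat (map (\<lambda>j. map (Cons j) (PS j)) [0..<n])) = {i # q | i q. i < n \<and> q \<in> set (PS i)}"
  by auto

lemma replace_all_Fun:
  assumes "\<forall>p\<in>set ps. \<exists>i q. p = i # q \<and> i < length ss"
  shows "replace_all (Fun f ss) (map (\<lambda>p. (p, g p)) ps) =
    Fun f (map (\<lambda>i. replace_all (ss ! i) (map (\<lambda>q. (q, g (i # q))) (sel i ps))) [0..<length ss])"
  using assms
proof (induction ps)
  case Nil then show ?case by (simp add: map_nth)
next
  case (Cons p ps)
  then obtain i q where p: "p = i # q" "i < length ss" by auto
  have IH: "replace_all (Fun f ss) (map (\<lambda>p. (p, g p)) ps) =
    Fun f (map (\<lambda>i. replace_all (ss ! i) (map (\<lambda>q. (q, g (i # q))) (sel i ps))) [0..<length ss])"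
    using Cons by auto
  show ?case using p by (auto simp: IH intro!: nth_equalityI simp: nth_list_update)
qed

lemma par_step_imp_par:
  "distinct ps \<Longrightarrow> set ps \<subseteq> poss s \<Longrightarrow> pairwise_parallel ps \<Longrightarrow>
   (\<forall>p \<in> set ps. \<exists>l r \<mu>. (l, r) \<in> R \<and> s |_ p = l \<cdot> \<mu> \<and> t |_ p = r \<cdot> \<mu>) \<Longrightarrow>
   t = replace_all s (map (\<lambda>p. (p, t |_ p)) ps) \<Longrightarrow> par R s t"
proof (induction s arbitrary: ps t)
  case (Var x)
  show ?case
  proof (cases "[] \<in> set ps")
    case True
    then obtain l r \<mu> where "(l, r) \<in> R" "Var x = l \<cdot> \<mu>" "t = r \<cdot> \<mu>" using Var by fastforce
    then show ?thesis by (metis par_rule)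
  next
    case False
    then have "ps = []" using Var(2) by (cases ps) auto
    then show ?thesis using Var by (simp add: par_refl)
  qed
next
  case (Fun f ss)
  show ?case
  proof (cases "[] \<in> set ps")
    case True
    then obtain l r \<mu> where "(l, r) \<in> R" "Fun f ss = l \<cdot> \<mu>" "t = r \<cdot> \<mu>" using Fun by fastforce
    then show ?thesis by (metis par_rule)
  next
    case False
    have ps: "\<forall>p\<in>set ps. \<exists>i q. p = i # q \<and> i < length ss"
      using Fun.prems(2) False by (metis in_mono neq_Nil_conv poss_Fun_Cons)
    define F where "F i = replace_all (ss ! i) (map (\<lambda>q. (q, t |_ (i # q))) (sel i ps))" for i
    have Fe: "F = (\<lambda>i. replace_all (ss ! i) (map (\<lambda>q. (q, t |_ (i # q))) (sel i ps)))"
      by (rule ext) (simp add: F_def)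
    have t: "t = Fun f (map F [0..<length ss])"
      using Fun.prems(5) replace_all_Fun[OF ps, of f "\<lambda>p. t |_ p"] unfolding Fe by simp
    have tsub: "t |_ (i # q) = F i |_ q" if "i < length ss" for i q
      using that t by simp
    show ?thesis
    proof (subst t, rule par_fun)
      show "length ss = length (map F [0..<length ss])" by simp
      fix i assume "i < length (map F [0..<length ss])"
      then have i: "i < length ss" by simp
      have "par R (ss ! i) (F i)"
      proof (rule Fun.IH[OF nth_mem[OF i]])
        show "distinct (sel i ps)" using Fun.prems(1) by (rule distinct_sel)
        show "set (sel i ps) \<subseteq> poss (ss ! i)" using Fun.prems(2) by auto
        show "pairwise_parallel (sel i ps)"
          unfolding pairwise_parallel_set[OF distinct_sel[OF Fun.prems(1)]]
        proof (intro ballI impI)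
          fix p q assume "p \<in> set (sel i ps)" "q \<in> set (sel i ps)" "p \<noteq> q"
          then have "parallel_pos (i # p) (i # q)" using Fun.prems(1,3) by (auto simp: pairwise_parallel_set)
          then show "parallel_pos p q" by (simp add: parallel_Cons)
        qed
        show "\<forall>p\<in>set (sel i ps). \<exists>l r \<mu>. (l, r) \<in> R \<and> ss ! i |_ p = l \<cdot> \<mu> \<and> F i |_ p = r \<cdot> \<mu>"
          using Fun.prems(4) i tsub by fastforce
        show "F i = replace_all (ss ! i) (map (\<lambda>p. (p, F i |_ p)) (sel i ps))"
        proof -
          have eq: "map (\<lambda>q. (q, t |_ (i # q))) (sel i ps) = map (\<lambda>p. (p, F i |_ p)) (sel i ps)"
            using tsub[OF i] by simp
          show ?thesis by (simp only: eq[symmetric]) (rule F_def)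
        qed
      qed
      then show "par R (ss ! i) (map F [0..<length ss] ! i)" using i by simp
    qed
  qed
qed

lemma par_imp_par_step:
  "par R s t \<Longrightarrow> \<exists>ps. distinct ps \<and> set ps \<subseteq> poss s \<and> pairwise_parallel ps \<and>
   (\<forall>p \<in> set ps. \<exists>l r \<mu>. (l, r) \<in> R \<and> s |_ p = l \<cdot> \<mu> \<and> t |_ p = r \<cdot> \<mu>) \<and>
   t = replace_all s (map (\<lambda>p. (p, t |_ p)) ps)"
proof (induction rule: par.induct)
  case (par_var x)
  then show ?case by (intro exI[of _ "[]"]) (auto simp: pairwise_parallel_def)
next
  case (par_rule l r \<mu>)
  then show ?case by (intro exI[of _ "[[]]"]) (auto simp: pairwise_parallel_def)
next
  case (par_fun ss ts f)
  define G where "G i ps \<longleftrightarrow> distinct ps \<and> set ps \<subseteq> poss (ss ! i) \<and> pairwise_parallel ps \<and>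
   (\<forall>p \<in> set ps. \<exists>l r \<mu>. (l, r) \<in> R \<and> ss ! i |_ p = l \<cdot> \<mu> \<and> ts ! i |_ p = r \<cdot> \<mu>) \<and>
   ts ! i = replace_all (ss ! i) (map (\<lambda>p. (p, ts ! i |_ p)) ps)" for i ps
  have "\<exists>ps. G i ps" if "i < length ts" for i
    using par_fun(3)[OF that] unfolding G_def by blast
  then obtain PS where PS: "\<And>i. i < length ts \<Longrightarrow> G i (PS i)" by metis
  have PS1: "\<And>i. i < length ts \<Longrightarrow> distinct (PS i)" 
   and PS2: "\<And>i. i < length ts \<Longrightarrow> set (PS i) \<subseteq> poss (ss ! i)"
   and PS4: "\<And>i p. i < length ts \<Longrightarrow> p \<in> set (PS i) \<Longrightarrow> \<exists>l r \<mu>. (l, r) \<in> R \<and> ss ! i |_ p = l \<cdot> \<mu> \<and> ts ! i |_ p = r \<cdot> \<mu>"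
   and PS5: "\<And>i. i < length ts \<Longrightarrow> ts ! i = replace_all (ss ! i) (map (\<lambda>p. (p, ts ! i |_ p)) (PS i))"
    using PS by (auto simp: G_def)
  have PS3: "\<And>i p q. i < length ts \<Longrightarrow> p \<in> set (PS i) \<Longrightarrow> q \<in> set (PS i) \<Longrightarrow> p \<noteq> q \<Longrightarrow> parallel_pos p q"
  proof -
    fix i p q assume a: "i < length ts" "p \<in> set (PS i)" "q \<in> set (PS i)" "p \<noteq> q"
    then have "distinct (PS i)" "pairwise_parallel (PS i)" using PS[of i] by (auto simp: G_def)
    then show "parallel_pos p q" using a by (simp add: pairwise_parallel_set)
  qed
  define ps where "ps = concat (map (\<lambda>j. map (Cons j) (PS j)) [0..<length ts])"
  have setps: "set ps = {i # q | i q. i < length ts \<and> q \<in> set (PS i)}" unfolding ps_def by auto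
  show ?case
  proof (intro exI[of _ ps] conjI)
    show "distinct ps" unfolding ps_def using PS1 by (intro distinct_concat_Cons) auto
    show "set ps \<subseteq> poss (Fun f ss)"
    proof
      fix p assume "p \<in> set ps"
      then obtain i q where "p = i # q" "i < length ts" "q \<in> set (PS i)" unfolding setps by blast
      then show "p \<in> poss (Fun f ss)" using PS2[of i] par_fun(1) by auto
    qed
    show "pairwise_parallel ps"
      unfolding pairwise_parallel_set[OF \<open>distinct ps\<close>] setps
      using PS3 by (auto simp: parallel_Cons) blast
    show "\<forall>p\<in>set ps. \<exists>l r \<mu>. (l, r) \<in> R \<and> Fun f ss |_ p = l \<cdot> \<mu> \<and> Fun f ts |_ p = r \<cdot> \<mu>"
      unfolding setps using PS4 par_fun(1) by auto
    have ps': "\<forall>p\<in>set ps. \<exists>i q. p = i # q \<and> i < length ss" using setps par_fun(1) by auto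
    have "replace_all (Fun f ss) (map (\<lambda>p. (p, Fun f ts |_ p)) ps) =
      Fun f (map (\<lambda>i. replace_all (ss ! i) (map (\<lambda>q. (q, Fun f ts |_ (i # q))) (sel i ps))) [0..<length ss])"
      by (rule replace_all_Fun[OF ps'])
    also have "\<dots> = Fun f (map (\<lambda>i. ts ! i) [0..<length ss])"
    proof -
      have "replace_all (ss ! i) (map (\<lambda>q. (q, Fun f ts |_ (i # q))) (sel i ps)) = ts ! i"
        if i: "i < length ss" for i
      proof -
        have "sel i ps = PS i" unfolding ps_def sel_concat using i par_fun(1) by simp
        then show ?thesis using PS5[of i] i par_fun(1) by simp
      qed
      then have "map (\<lambda>i. replace_all (ss ! i) (map (\<lambda>q. (q, Fun f ts |_ (i # q))) (sel i ps))) [0..<length ss]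
         = map (\<lambda>i. ts ! i) [0..<length ss]" by (intro map_cong) auto
      then show ?thesis by (rule arg_cong)
    qed
    also have "\<dots> = Fun f ts" using par_fun(1) by (simp add: map_nth)
    finally show "Fun f ts = replace_all (Fun f ss) (map (\<lambda>p. (p, Fun f ts |_ p)) ps)" by simp
  qed
qed

lemma par_step_eq: "(s, t) \<in> par_step R \<longleftrightarrow> par R s t"
proof
  assume "(s, t) \<in> par_step R"
  then obtain ps where "distinct ps" "set ps \<subseteq> poss s" "pairwise_parallel ps"
     "\<forall>p \<in> set ps. \<exists>l r \<mu>. (l, r) \<in> R \<and> s |_ p = l \<cdot> \<mu> \<and> t |_ p = r \<cdot> \<mu>"
     "t = replace_all s (map (\<lambda>p. (p, t |_ p)) ps)" unfolding par_step_def by blast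
  then show "par R s t" by (rule par_step_imp_par)
next
  assume "par R s t"
  from par_imp_par_step[OF this] show "(s, t) \<in> par_step R" unfolding par_step_def by simp
qed




section \<open>rstep, conv, join closure properties\<close>

lemma rstep_rule: "(l, r) \<in> R \<Longrightarrow> (l \<cdot> \<sigma>, r \<cdot> \<sigma>) \<in> rstep R"
  unfolding rstep_def by (intro CollectI, simp) (intro exI[of _ "[]"], auto)

lemma rstep_ctx: "(s, t) \<in> rstep R \<Longrightarrow> i < length ss \<Longrightarrow> (Fun f (ss[i := s]), Fun f (ss[i := t])) \<in> rstep R"
proof -
  assume st: "(s, t) \<in> rstep R" and i: "i < length ss"
  from st obtain p l r \<sigma> where "(l, r) \<in> R" "p \<in> poss s" "s |_ p = l \<cdot> \<sigma>" "t = replace_at s p (r \<cdot> \<sigma>)"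
    unfolding rstep_def by blast
  moreover have "i # p \<in> poss (Fun f (ss[i := s]))" using i \<open>p \<in> poss s\<close> by simp
  moreover have "Fun f (ss[i := s]) |_ (i # p) = l \<cdot> \<sigma>" using i \<open>s |_ p = l \<cdot> \<sigma>\<close> by simp
  moreover have "Fun f (ss[i := t]) = replace_at (Fun f (ss[i := s])) (i # p) (r \<cdot> \<sigma>)"
    using i \<open>t = replace_at s p (r \<cdot> \<sigma>)\<close> by simp
  ultimately show ?thesis unfolding rstep_def by blast
qed

lemma rstep_subst: "(s, t) \<in> rstep R \<Longrightarrow> (s \<cdot> \<tau>, t \<cdot> \<tau>) \<in> rstep R"
proof -
  assume st: "(s, t) \<in> rstep R"
  from st obtain p l r \<sigma> where lr: "(l, r) \<in> R" and p: "p \<in> poss s" and sp: "s |_ p = l \<cdot> \<sigma>"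
    and t: "t = replace_at s p (r \<cdot> \<sigma>)"
    unfolding rstep_def by blast
  have "p \<in> poss (s \<cdot> \<tau>)" using p by (rule poss_subst)
  moreover have "(s \<cdot> \<tau>) |_ p = l \<cdot> subst_compose \<sigma> \<tau>" using p sp by (simp add: subt_at_subst subst_apply_comp)
  moreover have "t \<cdot> \<tau> = replace_at (s \<cdot> \<tau>) p (r \<cdot> subst_compose \<sigma> \<tau>)"
    using p t by (simp add: replace_at_subst subst_apply_comp)
  ultimately show ?thesis using lr unfolding rstep_def by blast
qed

lemma rsteps_subst: "(s, t) \<in> (rstep R)\<^sup>* \<Longrightarrow> (s \<cdot> \<tau>, t \<cdot> \<tau>) \<in> (rstep R)\<^sup>*"
  by (induction rule: rtrancl_induct) (auto intro: rtrancl_into_rtrancl rstep_subst)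

lemma rsteps_ctx: "(s, t) \<in> (rstep R)\<^sup>* \<Longrightarrow> i < length ss \<Longrightarrow> (Fun f (ss[i := s]), Fun f (ss[i := t])) \<in> (rstep R)\<^sup>*"
  by (induction rule: rtrancl_induct) (auto intro: rtrancl_into_rtrancl rstep_ctx)

lemma conv_refl[simp]: "(s, s) \<in> conv C"
  by (simp add: conv_def)

lemma conv_sym: "(s, t) \<in> conv C \<Longrightarrow> (t, s) \<in> conv C"
  unfolding conv_def by (metis converse_Un converse_converse rtrancl_converseI sup_commute)

lemma conv_subst: "(s, t) \<in> conv C \<Longrightarrow> (s \<cdot> \<tau>, t \<cdot> \<tau>) \<in> conv C"
  unfolding conv_def
  by (induction rule: rtrancl_induct) (auto intro: rtrancl_into_rtrancl rstep_subst)

lemma conv_ctx: "(s, t) \<in> conv C \<Longrightarrow> i < length ss \<Longrightarrow> (Fun f (ss[i := s]), Fun f (ss[i := t])) \<in> conv C"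
  unfolding conv_def
  by (induction rule: rtrancl_induct) (auto intro: rtrancl_into_rtrancl rstep_ctx)

lemma conv_args_aux:
  "list_all2 (\<lambda>s t. (s, t) \<in> conv C) ss ts \<Longrightarrow> (Fun f (pre @ ss), Fun f (pre @ ts)) \<in> conv C"
proof (induction ss ts arbitrary: pre rule: list_all2_induct)
  case Nil then show ?case by simp
next
  case (Cons s ss t ts)
  have "(Fun f ((pre @ s # ss)[length pre := s]), Fun f ((pre @ s # ss)[length pre := t])) \<in> conv C"
    using Cons(1) by (intro conv_ctx) auto
  then have 1: "(Fun f (pre @ s # ss), Fun f (pre @ t # ss)) \<in> conv C" by (simp add: list_update_length)
  have 2: "(Fun f ((pre @ [t]) @ ss), Fun f ((pre @ [t]) @ ts)) \<in> conv C" by (rule Cons(3))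
  show ?case using 1 2 unfolding conv_def by simp
qed

lemma conv_args:
  "length ss = length ts \<Longrightarrow> (\<And>i. i < length ts \<Longrightarrow> (ss ! i, ts ! i) \<in> conv C) \<Longrightarrow> (Fun f ss, Fun f ts) \<in> conv C"
  using conv_args_aux[of C ss ts f "[]"] by (simp add: list_all2_conv_all_nth)

lemma join_sym: "(s, t) \<in> join R \<Longrightarrow> (t, s) \<in> join R"
  unfolding join_def by auto

lemma join_subst: "(s, t) \<in> join R \<Longrightarrow> (s \<cdot> \<tau>, t \<cdot> \<tau>) \<in> join R"
  unfolding join_def by (auto intro: rsteps_subst)

lemma join_ctx: "(s, t) \<in> join R \<Longrightarrow> i < length ss \<Longrightarrow> (Fun f (ss[i := s]), Fun f (ss[i := t])) \<in> join R"
  unfolding join_def by (auto intro: rsteps_ctx)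

section \<open>Unification of linear variable-disjoint terms\<close>

lemma linear_unify:
  "linear_term s \<Longrightarrow> linear_term t \<Longrightarrow> vars s \<inter> vars t = {} \<Longrightarrow> s \<cdot> \<tau> = t \<cdot> \<tau> \<Longrightarrow>
   \<exists>\<theta>. s \<cdot> \<theta> = t \<cdot> \<theta> \<and> (\<forall>x. x \<notin> vars s \<union> vars t \<longrightarrow> \<theta> x = Var x) \<and>
        (\<forall>\<tau>'. s \<cdot> \<tau>' = t \<cdot> \<tau>' \<longrightarrow> (\<forall>x. \<theta> x \<cdot> \<tau>' = \<tau>' x))"
proof (induction s arbitrary: t \<tau>)
  case (Var x)
  define \<theta> where "\<theta> = Var(x := t)"
  have "t \<cdot> \<theta> = t" unfolding \<theta>_def using Var(3) by (intro trans[OF term_subst_eq subst_Var_id]) auto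
  moreover have tx: "\<theta> x = t" and ty: "\<And>y. y \<noteq> x \<Longrightarrow> \<theta> y = Var y" by (auto simp: \<theta>_def)
  moreover have "\<theta> y \<cdot> \<tau>' = \<tau>' y" if "Var x \<cdot> \<tau>' = t \<cdot> \<tau>'" for \<tau>' y
    using that tx ty by (cases "y = x") auto
  ultimately show ?case by (intro exI[of _ \<theta>]) auto
next
  case (Fun f ss)
  show ?case
  proof (cases t)
    case (Var y)
    define \<theta> where "\<theta> = Var(y := Fun f ss)"
    have "Fun f ss \<cdot> \<theta> = Fun f ss" unfolding \<theta>_def using Fun(4) Var by (intro trans[OF term_subst_eq subst_Var_id]) auto
    moreover have ty: "\<theta> y = Fun f ss" and tx: "\<And>x. x \<noteq> y \<Longrightarrow> \<theta> x = Var x" by (auto simp: \<theta>_def)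
    moreover have "\<theta> x \<cdot> \<tau>' = \<tau>' x" if "Fun f ss \<cdot> \<tau>' = Var y \<cdot> \<tau>'" for \<tau>' x
      using that tx ty by (cases "y = x") (auto simp del: subst_apply.simps(2))
    ultimately show ?thesis using Var ty by (intro exI[of _ \<theta>]) (auto simp del: subst_apply.simps(2))
  next
    case (Fun g ts)
    have fg: "f = g" and len: "length ss = length ts" 
      using Fun.prems(4) \<open>t = Fun g ts\<close> by (auto dest: map_eq_imp_length_eq)
    have meq: "map (\<lambda>t. t \<cdot> \<tau>) ss = map (\<lambda>t. t \<cdot> \<tau>) ts" using Fun.prems(4) \<open>t = Fun g ts\<close> by simp
    have eqi: "ss ! i \<cdot> \<tau> = ts ! i \<cdot> \<tau>" if "i < length ss" for i
      using arg_cong[OF meq, of "\<lambda>xs. xs ! i"] that len by simp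
    define V where "V i = vars (ss ! i) \<union> vars (ts ! i)" for i
    have "\<exists>\<theta>. ss ! i \<cdot> \<theta> = ts ! i \<cdot> \<theta> \<and> (\<forall>x. x \<notin> V i \<longrightarrow> \<theta> x = Var x) \<and>
        (\<forall>\<tau>'. ss ! i \<cdot> \<tau>' = ts ! i \<cdot> \<tau>' \<longrightarrow> (\<forall>x. \<theta> x \<cdot> \<tau>' = \<tau>' x))" if i: "i < length ss" for i
    proof -
      have "linear_term (ss ! i)" "linear_term (ts ! i)" using Fun.prems(1,2) \<open>t = Fun g ts\<close> i len by auto
      moreover have "vars (ss ! i) \<inter> vars (ts ! i) = {}" 
      proof -
        have "ss ! i \<in> set ss" "ts ! i \<in> set ts" using i len by auto
        then show ?thesis using Fun.prems(3) \<open>t = Fun g ts\<close> by auto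
      qed
      ultimately show ?thesis unfolding V_def using Fun.IH[OF nth_mem[OF i]] eqi[OF i] by blast
    qed
    then obtain \<Theta> where \<Theta>: "\<And>i. i < length ss \<Longrightarrow> ss ! i \<cdot> \<Theta> i = ts ! i \<cdot> \<Theta> i \<and> (\<forall>x. x \<notin> V i \<longrightarrow> \<Theta> i x = Var x) \<and>
        (\<forall>\<tau>'. ss ! i \<cdot> \<tau>' = ts ! i \<cdot> \<tau>' \<longrightarrow> (\<forall>x. \<Theta> i x \<cdot> \<tau>' = \<tau>' x))" by metis
    have Vdisj: "i = j" if "i < length ss" "j < length ss" "x \<in> V i" "x \<in> V j" for i j x
    proof (rule ccontr)
      assume ij: "i \<noteq> j"
      have d1: "vars (ss ! i) \<inter> vars (ss ! j) = {}" using Fun.prems(1) that ij by auto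
      have d2: "vars (ts ! i) \<inter> vars (ts ! j) = {}" using Fun.prems(2) \<open>t = Fun g ts\<close> that ij len by auto
      have d3: "vars (ss ! k) \<inter> vars (ts ! k') = {}" if "k < length ss" "k' < length ss" for k k'
      proof -
        have "ss ! k \<in> set ss" "ts ! k' \<in> set ts" using that len by auto
        then show ?thesis using Fun.prems(3) \<open>t = Fun g ts\<close> by auto
      qed
      show False using d1 d2 d3[of i j] d3[of j i] that unfolding V_def by blast
    qed
    define \<theta> where "\<theta> x = (if \<exists>i < length ss. x \<in> V i then \<Theta> (SOME i. i < length ss \<and> x \<in> V i) x else Var x)" for x
    have \<theta>i: "\<theta> x = \<Theta> i x" if "i < length ss" "x \<in> V i" for i x
    proof -
      have "(SOME i. i < length ss \<and> x \<in> V i) = i" using that Vdisj by (intro some_equality) auto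
      then show ?thesis using that unfolding \<theta>_def by auto
    qed
    have \<theta>out: "\<theta> x = Var x" if "\<forall>i < length ss. x \<notin> V i" for x
      using that unfolding \<theta>_def by auto
    show ?thesis
    proof (intro exI[of _ \<theta>] conjI allI impI)
      have "ss ! i \<cdot> \<theta> = ts ! i \<cdot> \<theta>" if i: "i < length ss" for i
      proof -
        have "ss ! i \<cdot> \<theta> = ss ! i \<cdot> \<Theta> i" by (rule term_subst_eq) (simp add: \<theta>i[OF i] V_def)
        moreover have "ts ! i \<cdot> \<theta> = ts ! i \<cdot> \<Theta> i" by (rule term_subst_eq) (simp add: \<theta>i[OF i] V_def)
        ultimately show ?thesis using \<Theta>[OF i] by simp
      qed
      then show "Fun f ss \<cdot> \<theta> = t \<cdot> \<theta>" using \<open>t = Fun g ts\<close> fg len by (auto intro: nth_equalityI)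
    next
      fix x assume "x \<notin> vars (Fun f ss) \<union> vars t"
      then have "\<forall>i < length ss. x \<notin> V i" unfolding V_def using \<open>t = Fun g ts\<close> len by (auto intro: nth_mem)
      then show "\<theta> x = Var x" by (rule \<theta>out)
    next
      fix \<tau>' x assume u: "Fun f ss \<cdot> \<tau>' = t \<cdot> \<tau>'"
      show "\<theta> x \<cdot> \<tau>' = \<tau>' x"
      proof (cases "\<exists>i < length ss. x \<in> V i")
        case True
        then obtain i where i: "i < length ss" "x \<in> V i" by blast
        have meq': "map (\<lambda>t. t \<cdot> \<tau>') ss = map (\<lambda>t. t \<cdot> \<tau>') ts" using u \<open>t = Fun g ts\<close> by simp
        have "ss ! i \<cdot> \<tau>' = ts ! i \<cdot> \<tau>'"
          using arg_cong[OF meq', of "\<lambda>xs. xs ! i"] i len by simp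
        then show ?thesis using \<Theta>[OF i(1)] \<theta>i[OF i] by auto
      next
        case False then show ?thesis using \<theta>out by auto
      qed
    qed
  qed
qed

lemma bij_extend:
  assumes inj: "inj_on f A" and disj: "f ` A \<inter> A = {}"
  shows "\<exists>\<pi>. bij \<pi> \<and> (\<forall>x\<in>A. \<pi> x = f x)"
proof -
  define \<pi> where "\<pi> x = (if x \<in> A then f x else if x \<in> f ` A then the_inv_into A f x else x)" for x
  have inv: "\<pi> (\<pi> x) = x" for x
  proof (cases "x \<in> A")
    case True
    then have "f x \<notin> A" using disj by auto
    then show ?thesis using True inj unfolding \<pi>_def by (auto simp: the_inv_into_f_f)
  next
    case False
    show ?thesis
    proof (cases "x \<in> f ` A")
      case True
      then have "the_inv_into A f x \<in> A" using inj by (auto simp: the_inv_into_f_f)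
      then show ?thesis using True False inj unfolding \<pi>_def by (auto simp: f_the_inv_into_f)
    next
      case False2: False
      then show ?thesis using False unfolding \<pi>_def by auto
    qed
  qed
  have "bij \<pi>" by (rule o_bij[of \<pi>]) (auto simp: inv)
  then show ?thesis unfolding \<pi>_def by auto
qed




lemma pairwise_parallel_single[simp]: "pairwise_parallel [p]"
  by (simp add: pairwise_parallel_def)

lemma decomp:
  assumes "linear_term l" "par B (l \<cdot> \<sigma>) t"
  shows "\<exists>Q lr mu \<sigma>'. distinct Q \<and> set Q \<subseteq> fun_poss l \<and> pairwise_parallel Q \<and>
    (\<forall>q\<in>set Q. lr q \<in> B \<and> (l |_ q) \<cdot> \<sigma> = fst (lr q) \<cdot> mu q) \<and>
    (\<forall>x. par B (\<sigma> x) (\<sigma>' x)) \<and>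
    (\<forall>q\<in>set Q. \<forall>x\<in>vars (l |_ q). \<sigma>' x = \<sigma> x) \<and>
    t = replace_all (l \<cdot> \<sigma>') (map (\<lambda>q. (q, snd (lr q) \<cdot> mu q)) Q)"
  using assms
proof (induction l arbitrary: t)
  case (Var x)
  define \<sigma>' where "\<sigma>' = \<sigma>(x := t)"
  have "\<forall>y. par B (\<sigma> y) (\<sigma>' y)" using Var(2) by (auto simp: \<sigma>'_def par_refl)
  moreover have "t = replace_all (Var x \<cdot> \<sigma>') []" by (simp add: \<sigma>'_def)
  ultimately show ?case
    by (intro exI[where x="[]"] exI[where x="\<lambda>_. undefined"] exI[where x="\<lambda>_. undefined"] exI[where x=\<sigma>']) 
      (simp add: pairwise_parallel_def)
next
  case (Fun f ls)
  let ?n = "length ls"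
  from Fun.prems(2) show ?case
  proof (cases rule: par.cases)
    case (par_rule l' r' \<mu>)
    show ?thesis
      by (intro exI[where x="[[]]"] exI[where x="\<lambda>_. (l', r')"] exI[where x="\<lambda>_. \<mu>"] exI[where x=\<sigma>])
        (use par_rule in \<open>auto simp: par_refl\<close>)
  next
    case (par_fun ss ts)
    have ss: "ss = map (\<lambda>t. t \<cdot> \<sigma>) ls" using par_fun by simp
    have lents: "length ts = ?n" using par_fun ss by simp
    define G where "G i Q lr mu \<sigma>' \<longleftrightarrow> distinct Q \<and> set Q \<subseteq> fun_poss (ls ! i) \<and> pairwise_parallel Q \<and>
      (\<forall>q\<in>set Q. lr q \<in> B \<and> (ls ! i |_ q) \<cdot> \<sigma> = fst (lr q) \<cdot> mu q) \<and>
      (\<forall>x. par B (\<sigma> x) (\<sigma>' x)) \<and>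
      (\<forall>q\<in>set Q. \<forall>x\<in>vars (ls ! i |_ q). \<sigma>' x = \<sigma> x) \<and>
      ts ! i = replace_all (ls ! i \<cdot> \<sigma>') (map (\<lambda>q. (q, snd (lr q) \<cdot> mu q)) Q)" for i Q lr mu \<sigma>'
    have "\<exists>Q lr mu \<sigma>'. G i Q lr mu \<sigma>'" if i: "i < ?n" for i
    proof -
      have "linear_term (ls ! i)" using Fun.prems(1) i by simp
      moreover have "par B (ls ! i \<cdot> \<sigma>) (ts ! i)" using par_fun(4)[of i] ss i lents by simp
      ultimately show ?thesis unfolding G_def using Fun.IH[OF nth_mem[OF i]] by blast
    qed
    then obtain QQ LR MU SS where G: "\<And>i. i < ?n \<Longrightarrow> G i (QQ i) (LR i) (MU i) (SS i)" by metis
    have uniq: "i = j" if "i < ?n" "j < ?n" "x \<in> vars (ls ! i)" "x \<in> vars (ls ! j)" for i j x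
      using Fun.prems(1) that by auto
    define Q where "Q = concat (map (\<lambda>j. map (Cons j) (QQ j)) [0..<?n])"
    define lr where "lr p = (case p of [] \<Rightarrow> undefined | i # q \<Rightarrow> LR i q)" for p
    define mu where "mu p = (case p of [] \<Rightarrow> undefined | i # q \<Rightarrow> MU i q)" for p
    define \<sigma>' where "\<sigma>' x = (if \<exists>i < ?n. x \<in> vars (ls ! i) then SS (SOME i. i < ?n \<and> x \<in> vars (ls ! i)) x else \<sigma> x)" for x
    have \<sigma>'i: "\<sigma>' x = SS i x" if "i < ?n" "x \<in> vars (ls ! i)" for i x
    proof -
      have "(SOME i. i < ?n \<and> x \<in> vars (ls ! i)) = i" using that uniq by (intro some_equality) auto
      then show ?thesis using that unfolding \<sigma>'_def by auto
    qed
    have setQ: "set Q = {i # q | i q. i < ?n \<and> q \<in> set (QQ i)}" unfolding Q_def by auto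
    have G1: "distinct (QQ i)" and G2: "set (QQ i) \<subseteq> fun_poss (ls ! i)" and G3: "pairwise_parallel (QQ i)"
      and G4: "\<forall>q\<in>set (QQ i). LR i q \<in> B \<and> (ls ! i |_ q) \<cdot> \<sigma> = fst (LR i q) \<cdot> MU i q"
      and G5: "\<forall>x. par B (\<sigma> x) (SS i x)"
      and G6: "\<forall>q\<in>set (QQ i). \<forall>x\<in>vars (ls ! i |_ q). SS i x = \<sigma> x"
      and G7: "ts ! i = replace_all (ls ! i \<cdot> SS i) (map (\<lambda>q. (q, snd (LR i q) \<cdot> MU i q)) (QQ i))"
      if "i < ?n" for i using G[OF that] unfolding G_def by blast+
    show ?thesis
    proof (intro exI[where x=Q] exI[where x=lr] exI[where x=mu] exI[where x=\<sigma>'] conjI)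
      show dQ: "distinct Q" unfolding Q_def using G1 by (intro distinct_concat_Cons) auto
      show "set Q \<subseteq> fun_poss (Fun f ls)"
      proof
        fix p assume "p \<in> set Q"
        then obtain i q where "p = i # q" "i < ?n" "q \<in> set (QQ i)" unfolding setQ by blast
        then show "p \<in> fun_poss (Fun f ls)" using G2[of i] by auto
      qed
      show "pairwise_parallel Q"
        unfolding pairwise_parallel_set[OF dQ]
      proof (intro ballI impI)
        fix p p' assume "p \<in> set Q" "p' \<in> set Q" "p \<noteq> p'"
        then obtain i q j q' where pq: "p = i # q" "i < ?n" "q \<in> set (QQ i)" "p' = j # q'" "j < ?n" "q' \<in> set (QQ j)"
          unfolding setQ by blast
        show "parallel_pos p p'"
        proof (cases "i = j")
          case True
          then have "q \<noteq> q'" using pq \<open>p \<noteq> p'\<close> by simp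
          then have "parallel_pos q q'" using G1[of i] G3[of i] pq True by (simp add: pairwise_parallel_set)
          then show ?thesis using pq by (simp add: parallel_Cons)
        qed (use pq in \<open>simp add: parallel_Cons\<close>)
      qed
      show "\<forall>q\<in>set Q. lr q \<in> B \<and> (Fun f ls |_ q) \<cdot> \<sigma> = fst (lr q) \<cdot> mu q"
      proof
        fix p assume "p \<in> set Q"
        then obtain i q where "p = i # q" "i < ?n" "q \<in> set (QQ i)" unfolding setQ by blast
        then show "lr p \<in> B \<and> (Fun f ls |_ p) \<cdot> \<sigma> = fst (lr p) \<cdot> mu p"
          using G4[of i] by (auto simp: lr_def mu_def)
      qed
      show "\<forall>x. par B (\<sigma> x) (\<sigma>' x)"
      proof
        fix x show "par B (\<sigma> x) (\<sigma>' x)"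
        proof (cases "\<exists>i < ?n. x \<in> vars (ls ! i)")
          case True
          then obtain i where "i < ?n" "x \<in> vars (ls ! i)" by blast
          then show ?thesis using \<sigma>'i G5 by metis
        next
          case False
          then have "\<sigma>' x = \<sigma> x" unfolding \<sigma>'_def by auto
          then show ?thesis by (simp add: par_refl)
        qed
      qed
      show "\<forall>q\<in>set Q. \<forall>x\<in>vars (Fun f ls |_ q). \<sigma>' x = \<sigma> x"
      proof (intro ballI)
        fix p x assume "p \<in> set Q" "x \<in> vars (Fun f ls |_ p)"
        then obtain i q where pq: "p = i # q" "i < ?n" "q \<in> set (QQ i)" unfolding setQ by blast
        then have x: "x \<in> vars (ls ! i |_ q)" using \<open>x \<in> vars (Fun f ls |_ p)\<close> by simp
        have "q \<in> poss (ls ! i)" using G2[of i] pq fun_poss_poss by blast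
        then have "x \<in> vars (ls ! i)" using x vars_subt_at by blast
        then show "\<sigma>' x = \<sigma> x" using \<sigma>'i[OF pq(2)] G6[OF pq(2)] pq x by simp
      qed
      have ps': "\<forall>p\<in>set Q. \<exists>i q. p = i # q \<and> i < length (map (\<lambda>t. t \<cdot> \<sigma>') ls)" using setQ by auto
      have "replace_all (Fun f ls \<cdot> \<sigma>') (map (\<lambda>q. (q, snd (lr q) \<cdot> mu q)) Q) =
         Fun f (map (\<lambda>i. replace_all (map (\<lambda>t. t \<cdot> \<sigma>') ls ! i) (map (\<lambda>q. (q, snd (lr (i # q)) \<cdot> mu (i # q))) (sel i Q))) [0..<?n])"
        using replace_all_Fun[OF ps', of f "\<lambda>q. snd (lr q) \<cdot> mu q"] by simp
      also have "\<dots> = Fun f (map (\<lambda>i. ts ! i) [0..<?n])"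
      proof -
        have "replace_all (map (\<lambda>t. t \<cdot> \<sigma>') ls ! i) (map (\<lambda>q. (q, snd (lr (i # q)) \<cdot> mu (i # q))) (sel i Q)) = ts ! i"
          if i: "i < ?n" for i
        proof -
          have "sel i Q = QQ i" unfolding Q_def sel_concat using i by simp
          moreover have "ls ! i \<cdot> \<sigma>' = ls ! i \<cdot> SS i" by (rule term_subst_eq) (simp add: \<sigma>'i[OF i])
          ultimately show ?thesis using G7[OF i] i by (simp add: lr_def mu_def)
        qed
        then have "map (\<lambda>i. replace_all (map (\<lambda>t. t \<cdot> \<sigma>') ls ! i) (map (\<lambda>q. (q, snd (lr (i # q)) \<cdot> mu (i # q))) (sel i Q))) [0..<?n]
          = map (\<lambda>i. ts ! i) [0..<?n]" by (intro map_cong) auto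
        then show ?thesis by (rule arg_cong)
      qed
      also have "\<dots> = t"
      proof -
        have "map (\<lambda>i. ts ! i) [0..<?n] = ts" using lents map_nth[of ts] by simp
        then show ?thesis using par_fun by simp
      qed
      finally show "t = replace_all (Fun f ls \<cdot> \<sigma>') (map (\<lambda>q. (q, snd (lr q) \<cdot> mu q)) Q)" by simp
    qed
  qed (simp)
qed




lemma finite_vars[simp]: "finite (vars t)"
  by (induction t) auto

lemma rename_subst: "t \<cdot> (Var \<circ> \<pi>) \<cdot> \<tau> = t \<cdot> (\<lambda>y. \<tau> (\<pi> y))"
  by (induction t) auto

lemma vars_rule_pair[simp]: "vars_rule (a, b) = vars a \<union> vars b"
  by (simp add: vars_rule_def)

lemma subst_Var_comp_id[simp]: "t \<cdot> (Var \<circ> id) = t"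
  by (simp add: comp_def)

lemma fresh_renamings:
  fixes W V :: "'v set"
  assumes inf: "infinite (UNIV :: 'v set)" and fin: "finite V" "finite W"
  shows "\<exists>PI :: pos \<Rightarrow> 'v \<Rightarrow> 'v. (\<forall>q. bij (PI q)) \<and> (\<forall>q. PI q ` W \<inter> V = {}) \<and>
     (\<forall>p q. p \<noteq> q \<longrightarrow> PI p ` W \<inter> PI q ` W = {})"
proof -
  have "infinite (UNIV - (V \<union> W))" using inf fin by (simp add: Diff_infinite_finite)
  then obtain e :: "nat \<Rightarrow> 'v" where e: "inj e" "range e \<subseteq> UNIV - (V \<union> W)"
    using infinite_countable_subset by blast
  define h where "h = to_nat_on W"
  have h: "inj_on h W" unfolding h_def using fin by (intro inj_on_to_nat_on) (simp add: countable_finite)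
  define F where "F q x = e (prod_encode (to_nat (q :: pos), h x))" for q x
  have "\<exists>\<pi>. bij \<pi> \<and> (\<forall>x\<in>W. \<pi> x = F q x)" for q
  proof (rule bij_extend)
    show "inj_on (F q) W" unfolding F_def inj_on_def
      using e(1) h by (auto simp: inj_eq prod_encode_eq inj_on_eq_iff)
    show "F q ` W \<inter> W = {}" unfolding F_def using e(2) by auto
  qed
  then obtain PI where PI: "\<And>q. bij (PI q)" "\<And>q x. x \<in> W \<Longrightarrow> PI q x = F q x" by metis
  have img: "PI q ` W = F q ` W" for q using PI(2) by auto
  show ?thesis
  proof (intro exI[where x=PI] conjI allI impI)
    show "bij (PI q)" for q by (rule PI(1))
    show "PI q ` W \<inter> V = {}" for q unfolding img F_def using e(2) by auto
    fix p q :: pos assume "p \<noteq> q"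
    then show "PI p ` W \<inter> PI q ` W = {}" unfolding img F_def
      using e(1) by (auto simp: inj_eq prod_encode_eq)
  qed
qed

lemma mgu_from_unify:
  assumes "\<And>\<tau>. is_unifier \<tau> E \<longleftrightarrow> S \<cdot> \<tau> = T \<cdot> \<tau>"
    and "S \<cdot> \<theta> = T \<cdot> \<theta>" and "\<forall>\<tau>'. S \<cdot> \<tau>' = T \<cdot> \<tau>' \<longrightarrow> (\<forall>x. \<theta> x \<cdot> \<tau>' = \<tau>' x)"
  shows "is_mgu \<theta> E"
  unfolding is_mgu_def
proof (intro conjI allI impI)
  show "is_unifier \<theta> E" using assms by simp
  fix \<tau> assume "is_unifier \<tau> E"
  then have "\<forall>x. \<theta> x \<cdot> \<tau> = \<tau> x" using assms by simp
  then show "\<exists>\<delta>. \<tau> = subst_compose \<theta> \<delta>" by (intro exI[where x=\<tau>]) (simp add: subst_compose_def fun_eq_iff)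
qed




lemma root:
  fixes l r :: "('f, 'v) term"
  assumes inf: "infinite (UNIV :: 'v set)" and wf: "wf_trs R" and ll: "left_linear R"
    and AR: "A \<subseteq> R" and BR: "B \<subseteq> R" and P: "P = PCPS R C"
    and hyp: "\<forall>s t u. par_crit_peak R R s t u \<longrightarrow> (t, u) \<in> join R"
    and lrA: "(l, r) \<in> A" and st: "par B (l \<cdot> \<sigma>) t"
  shows "(\<exists>a b. par A t a \<and> (a, b) \<in> conv C \<and> par B (r \<cdot> \<sigma>) b) \<or>
         (\<exists>t'. par B t' t \<and> (l \<cdot> \<sigma>, t') \<in> rstep P \<and> (l \<cdot> \<sigma>, r \<cdot> \<sigma>) \<in> rstep P \<and> (t', r \<cdot> \<sigma>) \<in> join R)"
proof -
  have lrR: "(l, r) \<in> R" using lrA AR by auto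
  have lin: "linear_term l" using ll lrR unfolding left_linear_def by auto
  have vr: "vars r \<subseteq> vars l" and lnv: "\<forall>x. l \<noteq> Var x" using wf lrR unfolding wf_trs_def by auto
  obtain Q lr mu \<sigma>' where dQ: "distinct Q" and Qf: "set Q \<subseteq> fun_poss l" and Qp: "pairwise_parallel Q"
    and Qr: "\<forall>q\<in>set Q. lr q \<in> B \<and> (l |_ q) \<cdot> \<sigma> = fst (lr q) \<cdot> mu q"
    and \<sigma>'par: "\<forall>x. par B (\<sigma> x) (\<sigma>' x)"
    and \<sigma>'eq: "\<forall>q\<in>set Q. \<forall>x\<in>vars (l |_ q). \<sigma>' x = \<sigma> x"
    and t: "t = replace_all (l \<cdot> \<sigma>') (map (\<lambda>q. (q, snd (lr q) \<cdot> mu q)) Q)"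
    using decomp[OF lin st] by blast
  show ?thesis
  proof (cases "Q = []")
    case True
    then have "t = l \<cdot> \<sigma>'" using t by simp
    moreover have "par A (l \<cdot> \<sigma>') (r \<cdot> \<sigma>')" using lrA by (rule par_rule)
    moreover have "par B (r \<cdot> \<sigma>) (r \<cdot> \<sigma>')" using \<sigma>'par by (intro par_subst) auto
    ultimately show ?thesis by (intro disjI1 exI[where x="r \<cdot> \<sigma>'"]) auto
  next
    case Qne: False
    have QposS: "q \<in> poss l" if "q \<in> set Q" for q using Qf that fun_poss_poss by blast
    have lrR': "lr q \<in> R" if "q \<in> set Q" for q using Qr that BR by auto
    define V where "V = vars l \<union> vars r"
    define W where "W = (\<Union>q\<in>set Q. vars_rule (lr q))"
    have finW: "finite W" unfolding W_def vars_rule_def by auto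
    obtain PI :: "pos \<Rightarrow> 'v \<Rightarrow> 'v" where PIb: "\<And>q. bij (PI q)" and PIV: "\<And>q. PI q ` W \<inter> V = {}"
      and PId: "\<And>p q. p \<noteq> q \<Longrightarrow> PI p ` W \<inter> PI q ` W = {}"
      using fresh_renamings[OF inf _ finW, of V] unfolding V_def by auto
    define lrs where "lrs q = (fst (lr q) \<cdot> (Var \<circ> PI q), snd (lr q) \<cdot> (Var \<circ> PI q))" for q
    have vlrs: "vars_rule (lrs q) = PI q ` vars_rule (lr q)" for q
      unfolding lrs_def vars_rule_def by (auto simp: vars_rename)
    have Wq: "vars_rule (lr q) \<subseteq> W" if "q \<in> set Q" for q using that unfolding W_def by auto
    have disjV: "vars_rule (lrs q) \<inter> V = {}" if "q \<in> set Q" for q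
      using PIV[of q] Wq[OF that] unfolding vlrs by blast
    have disjQ: "vars_rule (lrs p) \<inter> vars_rule (lrs q) = {}" if "p \<in> set Q" "q \<in> set Q" "p \<noteq> q" for p q
      using PId[OF that(3)] Wq[OF that(1)] Wq[OF that(2)] unfolding vlrs by blast
    define \<tau>0 where "\<tau>0 x = (if \<exists>q\<in>set Q. x \<in> vars_rule (lrs q) then
        (let q = (SOME q. q \<in> set Q \<and> x \<in> vars_rule (lrs q)) in mu q (inv (PI q) x)) else \<sigma> x)" for x
    have T1: "\<tau>0 x = \<sigma> x" if "x \<in> V" for x
      using that disjV unfolding \<tau>0_def by auto
    have T2: "\<tau>0 (PI q y) = mu q y" if "q \<in> set Q" "y \<in> vars_rule (lr q)" for q y
    proof -
      have x: "PI q y \<in> vars_rule (lrs q)" using that vlrs by auto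
      have "(SOME q'. q' \<in> set Q \<and> PI q y \<in> vars_rule (lrs q')) = q"
        using x that disjQ by (intro some_equality) auto
      moreover have "inv (PI q) (PI q y) = y" using PIb[of q] by (simp add: bij_is_inj)
      ultimately show ?thesis using x that unfolding \<tau>0_def by auto
    qed
    have fst_lrs: "fst (lrs q) \<cdot> \<tau>0 = fst (lr q) \<cdot> mu q" if "q \<in> set Q" for q
      unfolding lrs_def using T2[OF that] by (simp add: rename_subst vars_rule_def, intro term_subst_eq) auto
    have snd_lrs: "snd (lrs q) \<cdot> \<tau>0 = snd (lr q) \<cdot> mu q" if "q \<in> set Q" for q
      unfolding lrs_def using T2[OF that] by (simp add: rename_subst vars_rule_def, intro term_subst_eq) auto
    have lsub_V: "vars (l |_ q) \<subseteq> V" if "q \<in> set Q" for q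
      using vars_subt_at[OF QposS[OF that]] unfolding V_def by auto
    have unif0: "fst (lrs q) \<cdot> \<tau>0 = (l |_ q) \<cdot> \<tau>0" if "q \<in> set Q" for q
    proof -
      have "(l |_ q) \<cdot> \<tau>0 = (l |_ q) \<cdot> \<sigma>" using lsub_V[OF that] T1 by (intro term_subst_eq) auto
      then show ?thesis using fst_lrs[OF that] Qr that by simp
    qed
    define \<tau>1 where "\<tau>1 x = (if x \<in> vars l then \<sigma>' x else \<tau>0 x)" for x
    have unif1: "fst (lrs q) \<cdot> \<tau>1 = (l |_ q) \<cdot> \<tau>1" if "q \<in> set Q" for q
    proof -
      have "fst (lrs q) \<cdot> \<tau>1 = fst (lrs q) \<cdot> \<tau>0"
        using disjV[OF that] unfolding \<tau>1_def V_def vars_rule_def by (intro term_subst_eq) (auto simp: disjoint_iff)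
      moreover have "(l |_ q) \<cdot> \<tau>1 = (l |_ q) \<cdot> \<tau>0"
      proof (rule term_subst_eq)
        fix x assume x: "x \<in> vars (l |_ q)"
        then have "x \<in> vars l" using vars_subt_at[OF QposS[OF that]] by auto
        then show "\<tau>1 x = \<tau>0 x" using x \<sigma>'eq that T1 unfolding \<tau>1_def V_def by auto
      qed
      ultimately show ?thesis using unif0[OF that] by simp
    qed
    have par01: "par B (\<tau>0 x) (\<tau>1 x)" for x
      using \<sigma>'par T1 unfolding \<tau>1_def V_def by (auto simp: par_refl)
    obtain g ls where lg: "l = Fun g ls" using lnv by (cases l) auto
    define S where "S = Fun g (map (\<lambda>p. fst (lrs p)) Q)"
    define T where "T = Fun g (map (\<lambda>p. l |_ p) Q)"
    define E where "E = {(fst (lrs p), l |_ p) | p. p \<in> set Q}"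
    have unifE: "is_unifier \<tau> E \<longleftrightarrow> S \<cdot> \<tau> = T \<cdot> \<tau>" for \<tau>
      unfolding is_unifier_def E_def S_def T_def by auto
    have linS: "linear_term S"
    proof -
      have "linear_term (fst (lrs p))" if "p \<in> set Q" for p
      proof -
        have "linear_term (fst (lr p))" using ll lrR'[OF that] unfolding left_linear_def by auto
        then show ?thesis unfolding lrs_def using PIb[of p] by (simp add: linear_rename bij_is_inj)
      qed
      moreover have "vars (fst (lrs (Q ! i))) \<inter> vars (fst (lrs (Q ! j))) = {}"
        if "i < length Q" "j < length Q" "i \<noteq> j" for i j
      proof -
        have "Q ! i \<noteq> Q ! j" using dQ that by (simp add: nth_eq_iff_index_eq)
        then have "vars_rule (lrs (Q ! i)) \<inter> vars_rule (lrs (Q ! j)) = {}" using disjQ that by auto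
        then show ?thesis unfolding vars_rule_def by auto
      qed
      ultimately show ?thesis unfolding S_def by auto
    qed
    have linT: "linear_term T"
    proof -
      have "linear_term (l |_ p)" if "p \<in> set Q" for p using linear_subt_at[OF QposS[OF that] lin] .
      moreover have "vars (l |_ (Q ! i)) \<inter> vars (l |_ (Q ! j)) = {}"
        if "i < length Q" "j < length Q" "i \<noteq> j" for i j
      proof -
        have "Q ! i \<noteq> Q ! j" using dQ that by (simp add: nth_eq_iff_index_eq)
        then have "parallel_pos (Q ! i) (Q ! j)" using Qp that dQ by (auto simp: pairwise_parallel_set)
        then show ?thesis using linear_parallel_vars[OF lin] QposS that by auto
      qed
      ultimately show ?thesis unfolding T_def by auto
    qed
    have disjST: "vars S \<inter> vars T = {}"
    proof -
      have "vars T \<subseteq> V" unfolding T_def using lsub_V by auto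
      moreover have "vars S \<inter> V = {}" unfolding S_def using disjV unfolding vars_rule_def
        by (auto simp: disjoint_iff)
      ultimately show ?thesis by blast
    qed
    have ST0: "S \<cdot> \<tau>0 = T \<cdot> \<tau>0" unfolding S_def T_def using unif0 by auto
    have ST1: "S \<cdot> \<tau>1 = T \<cdot> \<tau>1" unfolding S_def T_def using unif1 by auto
    obtain \<theta> where \<theta>ST: "S \<cdot> \<theta> = T \<cdot> \<theta>" and \<theta>mg: "\<forall>\<tau>'. S \<cdot> \<tau>' = T \<cdot> \<tau>' \<longrightarrow> (\<forall>x. \<theta> x \<cdot> \<tau>' = \<tau>' x)"
      using linear_unify[OF linS linT disjST ST0] by blast
    have mgu: "is_mgu \<theta> E" by (rule mgu_from_unify[OF unifE \<theta>ST \<theta>mg])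
    have th0: "w \<cdot> \<theta> \<cdot> \<tau>0 = w \<cdot> \<tau>0" for w
      using \<theta>mg ST0 by (simp add: subst_apply_comp subst_compose_def)
    have th1: "w \<cdot> \<theta> \<cdot> \<tau>1 = w \<cdot> \<tau>1" for w
      using \<theta>mg ST1 by (simp add: subst_apply_comp subst_compose_def)
    have l\<tau>0: "l \<cdot> \<tau>0 = l \<cdot> \<sigma>" using T1 unfolding V_def by (intro term_subst_eq) auto
    have r\<tau>0: "r \<cdot> \<tau>0 = r \<cdot> \<sigma>" using T1 unfolding V_def by (intro term_subst_eq) auto
    have l\<tau>1: "l \<cdot> \<tau>1 = l \<cdot> \<sigma>'" unfolding \<tau>1_def by (intro term_subst_eq) auto
    define t0 where "t0 = replace_all (l \<cdot> \<theta>) (map (\<lambda>p. (p, snd (lrs p) \<cdot> \<theta>)) Q)"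
    have t0\<tau>1: "t0 \<cdot> \<tau>1 = t"
    proof -
      have "t0 \<cdot> \<tau>1 = replace_all (l \<cdot> \<theta> \<cdot> \<tau>1) (map (\<lambda>p. (p, snd (lrs p) \<cdot> \<theta> \<cdot> \<tau>1)) Q)"
        unfolding t0_def using dQ Qp QposS by (intro replace_all_subst) (auto intro: poss_subst)
      also have "\<dots> = replace_all (l \<cdot> \<sigma>') (map (\<lambda>q. (q, snd (lr q) \<cdot> mu q)) Q)"
      proof -
        have "snd (lrs p) \<cdot> \<theta> \<cdot> \<tau>1 = snd (lr p) \<cdot> mu p" if "p \<in> set Q" for p
        proof -
          have "snd (lrs p) \<cdot> \<tau>1 = snd (lrs p) \<cdot> \<tau>0"
            using disjV[OF that] unfolding \<tau>1_def V_def vars_rule_def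
            by (intro term_subst_eq) (auto simp: disjoint_iff)
          then show ?thesis using th1 snd_lrs[OF that] by simp
        qed
        then have "map (\<lambda>p. (p, snd (lrs p) \<cdot> \<theta> \<cdot> \<tau>1)) Q = map (\<lambda>q. (q, snd (lr q) \<cdot> mu q)) Q" by simp
        then show ?thesis by (simp only: th1 l\<tau>1)
      qed
      finally show ?thesis using t by simp
    qed
    have t0par: "par B (t0 \<cdot> \<tau>0) t" using par01 t0\<tau>1 by (metis par_subst)
    show ?thesis
    proof (cases "Q = [[]] \<and> is_variant (lrs []) (l, r)")
      case True
      then obtain \<pi> where \<pi>: "fst (lrs []) = l \<cdot> (Var \<circ> \<pi>)" "snd (lrs []) = r \<cdot> (Var \<circ> \<pi>)"
        unfolding is_variant_def by auto
      have Q1: "Q = [[]]" using True by simp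
      have "l \<cdot> (\<lambda>y. \<tau>0 (\<pi> y)) = l \<cdot> \<sigma>"
        using fst_lrs[of "[]"] Qr Q1 \<pi>(1) by (simp add: rename_subst)
      then have "\<tau>0 (\<pi> y) = \<sigma> y" if "y \<in> vars l" for y using term_subst_eq_rev that by metis
      then have "r \<cdot> (\<lambda>y. \<tau>0 (\<pi> y)) = r \<cdot> \<sigma>" using vr by (intro term_subst_eq) auto
      then have "snd (lr []) \<cdot> mu [] = r \<cdot> \<sigma>" using snd_lrs[of "[]"] Q1 \<pi>(2) by (simp add: rename_subst)
      moreover have "t = snd (lr []) \<cdot> mu []" using t Q1 by simp
      ultimately show ?thesis by (intro disjI1 exI[where x=t]) (auto simp: par_refl)
    next
      case nv: False
      have pcp: "par_crit_peak R R (l \<cdot> \<theta>) t0 (r \<cdot> \<theta>)"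
        unfolding par_crit_peak_def
      proof (rule exI[where x=l], rule exI[where x=r], rule exI[where x=Q], rule exI[where x=lrs], rule exI[where x=\<theta>], intro conjI)
        show "variant_of (l, r) R" unfolding variant_of_def is_variant_def using lrR
          by (intro bexI[where x="(l, r)"] exI[where x=id]) auto
        show "Q \<noteq> []" by (rule Qne)
        show "distinct Q" "set Q \<subseteq> fun_poss l" "pairwise_parallel Q" by (fact dQ Qf Qp)+
        show "\<forall>p\<in>set Q. variant_of (lrs p) R"
        proof
          fix p assume p: "p \<in> set Q"
          show "variant_of (lrs p) R" unfolding variant_of_def is_variant_def using lrR'[OF p] PIb[of p]
            by (intro bexI[where x="lr p"] exI[where x="PI p"]) (auto simp: lrs_def)
        qed
        show "\<forall>p\<in>set Q. vars_rule (lrs p) \<inter> vars_rule (l, r) = {}" using disjV unfolding V_def by simp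
        show "\<forall>p\<in>set Q. \<forall>q\<in>set Q. p \<noteq> q \<longrightarrow> vars_rule (lrs p) \<inter> vars_rule (lrs q) = {}" using disjQ by blast
        show "is_mgu \<theta> {(fst (lrs p), l |_ p) |p. p \<in> set Q}" using mgu unfolding E_def .
        show "Q = [[]] \<longrightarrow> \<not> is_variant (lrs []) (l, r)" using nv by blast
      qed (simp_all add: t0_def)
      then have j: "(t0, r \<cdot> \<theta>) \<in> join R" using hyp by blast
      show ?thesis
      proof (cases "(t0, r \<cdot> \<theta>) \<in> conv C")
        case True
        have "(t, r \<cdot> \<theta> \<cdot> \<tau>1) \<in> conv C" using conv_subst[OF True, of \<tau>1] t0\<tau>1 by simp
        moreover have "par B (r \<cdot> \<sigma>) (r \<cdot> \<theta> \<cdot> \<tau>1)"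
          using par_subst[of "r \<cdot> \<theta>" B \<tau>0 \<tau>1] par01 th0[of r] r\<tau>0 by simp
        ultimately have "par A t t \<and> (t, r \<cdot> \<theta> \<cdot> \<tau>1) \<in> conv C \<and> par B (r \<cdot> \<sigma>) (r \<cdot> \<theta> \<cdot> \<tau>1)"
          by (simp add: par_refl)
        then show ?thesis by blast
      next
        case False
        have P1: "(l \<cdot> \<theta>, t0) \<in> P" and P2: "(l \<cdot> \<theta>, r \<cdot> \<theta>) \<in> P"
          unfolding P PCPS_def using pcp False by blast+
        have "(l \<cdot> \<theta> \<cdot> \<tau>0, t0 \<cdot> \<tau>0) \<in> rstep P" using P1 by (rule rstep_rule)
        moreover have "(l \<cdot> \<theta> \<cdot> \<tau>0, r \<cdot> \<theta> \<cdot> \<tau>0) \<in> rstep P" using P2 by (rule rstep_rule)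
        moreover have "(t0 \<cdot> \<tau>0, r \<cdot> \<theta> \<cdot> \<tau>0) \<in> join R" using j by (rule join_subst)
        ultimately show ?thesis using t0par th0[of l] th0[of r] l\<tau>0 r\<tau>0
          by (intro disjI2 exI[where x="t0 \<cdot> \<tau>0"]) auto
      qed
    qed
  qed
qed




definition concl where
  "concl R R1 R2 C P s t u \<longleftrightarrow> (\<exists>a b. par R2 t a \<and> (a, b) \<in> conv C \<and> par R1 u b) \<or>
     (\<exists>t' u'. par R1 t' t \<and> (s, t') \<in> rstep P \<and> (s, u') \<in> rstep P \<and> par R2 u' u \<and> (t', u') \<in> join R)"

lemma par_Fun_cases:
  assumes "par R (Fun f ss) t"
  shows "(\<exists>l r \<mu>. (l, r) \<in> R \<and> Fun f ss = l \<cdot> \<mu> \<and> t = r \<cdot> \<mu>) \<or>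
         (\<exists>ts. t = Fun f ts \<and> length ts = length ss \<and> (\<forall>i < length ss. par R (ss ! i) (ts ! i)))"
  using assms by (cases rule: par.cases) auto

context
  fixes R R1 R2 C P :: "('f, 'v) trs"
  assumes inf: "infinite (UNIV :: 'v set)"
    and wf: "wf_trs R" and ll: "left_linear R"
    and R1: "R1 \<subseteq> R" and R2: "R2 \<subseteq> R"
    and P: "P = PCPS R C"
    and hyp: "\<forall>s t u. par_crit_peak R R s t u \<longrightarrow> (t, u) \<in> join R"
begin

lemma rootA: "(l, r) \<in> R1 \<Longrightarrow> par R2 (l \<cdot> \<mu>) u \<Longrightarrow> concl R R1 R2 C P (l \<cdot> \<mu>) (r \<cdot> \<mu>) u"
proof -
  assume lr: "(l, r) \<in> R1" and u: "par R2 (l \<cdot> \<mu>) u"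
  from root[OF inf wf ll R1 R2 P hyp lr u]
  show ?thesis
  proof
    assume "\<exists>a b. par R1 u a \<and> (a, b) \<in> conv C \<and> par R2 (r \<cdot> \<mu>) b"
    then obtain a b where "par R1 u a" "(a, b) \<in> conv C" "par R2 (r \<cdot> \<mu>) b" by blast
    then have "par R2 (r \<cdot> \<mu>) b \<and> (b, a) \<in> conv C \<and> par R1 u a" by (simp add: conv_sym)
    then show ?thesis unfolding concl_def by blast
  next
    assume "\<exists>t'. par R2 t' u \<and> (l \<cdot> \<mu>, t') \<in> rstep P \<and> (l \<cdot> \<mu>, r \<cdot> \<mu>) \<in> rstep P \<and> (t', r \<cdot> \<mu>) \<in> join R"
    then obtain t' where "par R2 t' u" "(l \<cdot> \<mu>, t') \<in> rstep P" "(l \<cdot> \<mu>, r \<cdot> \<mu>) \<in> rstep P" "(t', r \<cdot> \<mu>) \<in> join R"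
      by blast
    then have "par R1 (r \<cdot> \<mu>) (r \<cdot> \<mu>) \<and> (l \<cdot> \<mu>, r \<cdot> \<mu>) \<in> rstep P \<and> (l \<cdot> \<mu>, t') \<in> rstep P \<and> par R2 t' u \<and> (r \<cdot> \<mu>, t') \<in> join R"
      by (simp add: par_refl join_sym)
    then show ?thesis unfolding concl_def by blast
  qed
qed

lemma rootB: "(l, r) \<in> R2 \<Longrightarrow> par R1 (l \<cdot> \<mu>) t \<Longrightarrow> concl R R1 R2 C P (l \<cdot> \<mu>) t (r \<cdot> \<mu>)"
proof -
  assume lr: "(l, r) \<in> R2" and t: "par R1 (l \<cdot> \<mu>) t"
  from root[OF inf wf ll R2 R1 P hyp lr t]
  show ?thesis
  proof
    assume "\<exists>a b. par R2 t a \<and> (a, b) \<in> conv C \<and> par R1 (r \<cdot> \<mu>) b"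
    then show ?thesis unfolding concl_def by blast
  next
    assume "\<exists>t'. par R1 t' t \<and> (l \<cdot> \<mu>, t') \<in> rstep P \<and> (l \<cdot> \<mu>, r \<cdot> \<mu>) \<in> rstep P \<and> (t', r \<cdot> \<mu>) \<in> join R"
    then obtain t' where "par R1 t' t" "(l \<cdot> \<mu>, t') \<in> rstep P" "(l \<cdot> \<mu>, r \<cdot> \<mu>) \<in> rstep P" "(t', r \<cdot> \<mu>) \<in> join R"
      by blast
    then have "par R1 t' t \<and> (l \<cdot> \<mu>, t') \<in> rstep P \<and> (l \<cdot> \<mu>, r \<cdot> \<mu>) \<in> rstep P \<and> par R2 (r \<cdot> \<mu>) (r \<cdot> \<mu>) \<and> (t', r \<cdot> \<mu>) \<in> join R"
      by (simp add: par_refl)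
    then show ?thesis unfolding concl_def by blast
  qed
qed

lemma main: "par R1 s t \<Longrightarrow> par R2 s u \<Longrightarrow> concl R R1 R2 C P s t u"
proof (induction s arbitrary: t u)
  case (Var x)
  from Var(1) show ?case
  proof cases
    case par_var
    from Var(2) show ?thesis
    proof cases
      case par_var
      have "par R2 t t \<and> (t, t) \<in> conv C \<and> par R1 u t" using \<open>t = Var x\<close> \<open>u = Var x\<close> by (simp add: par_refl)
      then show ?thesis unfolding concl_def by blast
    next
      case (par_rule l r \<mu>)
      then show ?thesis using rootB Var(1) by metis
    qed
  next
    case (par_rule l r \<mu>)
    then show ?thesis using rootA Var(2) by metis
  qed
next
  case (Fun f ss)
  from Fun.prems(1) show ?case
  proof cases
    case (par_rule l r \<mu>)
    then show ?thesis using rootA Fun.prems(2) by metis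
  next
    case (par_fun ts)
    have t2: "t = Fun f ts" and lts: "length ts = length ss" and pt: "\<And>i. i < length ss \<Longrightarrow> par R1 (ss ! i) (ts ! i)"
      using par_fun by auto
    from par_Fun_cases[OF Fun.prems(2)] show ?thesis
    proof
      assume "\<exists>l r \<mu>. (l, r) \<in> R2 \<and> Fun f ss = l \<cdot> \<mu> \<and> u = r \<cdot> \<mu>"
      then show ?thesis using rootB Fun.prems(1) by metis
    next
      assume "\<exists>us. u = Fun f us \<and> length us = length ss \<and> (\<forall>i < length ss. par R2 (ss ! i) (us ! i))"
      then obtain us where u2: "u = Fun f us" and lus: "length us = length ss" and pu: "\<And>i. i < length ss \<Longrightarrow> par R2 (ss ! i) (us ! i)"
        by blast
      let ?n = "length ss"
      have IH: "concl R R1 R2 C P (ss ! i) (ts ! i) (us ! i)" if "i < ?n" for i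
        using Fun.IH[OF nth_mem[OF that] pt[OF that] pu[OF that]] .
      show ?thesis
      proof (cases "\<exists>i < ?n. \<exists>t' u'. par R1 t' (ts ! i) \<and> (ss ! i, t') \<in> rstep P \<and> (ss ! i, u') \<in> rstep P \<and>
                  par R2 u' (us ! i) \<and> (t', u') \<in> join R")
        case True
        then obtain i t' u' where i: "i < ?n" and h: "par R1 t' (ts ! i)" "(ss ! i, t') \<in> rstep P"
          "(ss ! i, u') \<in> rstep P" "par R2 u' (us ! i)" "(t', u') \<in> join R" by blast
        have "par R1 (Fun f (ss[i := t'])) (Fun f ts)"
        proof (rule par.par_fun)
          show "length (ss[i := t']) = length ts" using lts by simp
          fix j assume "j < length ts"
          then show "par R1 (ss[i := t'] ! j) (ts ! j)" using h(1) pt lts by (cases "j = i") auto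
        qed
        moreover have "par R2 (Fun f (ss[i := u'])) (Fun f us)"
        proof (rule par.par_fun)
          show "length (ss[i := u']) = length us" using lus by simp
          fix j assume "j < length us"
          then show "par R2 (ss[i := u'] ! j) (us ! j)" using h(4) pu lus by (cases "j = i") auto
        qed
        moreover have "(Fun f ss, Fun f (ss[i := t'])) \<in> rstep P"
          using rstep_ctx[OF h(2) i, of f] by simp
        moreover have "(Fun f ss, Fun f (ss[i := u'])) \<in> rstep P"
          using rstep_ctx[OF h(3) i, of f] by simp
        moreover have "(Fun f (ss[i := t']), Fun f (ss[i := u'])) \<in> join R"
          using join_ctx[OF h(5) i] .
        ultimately show ?thesis unfolding concl_def using t2 u2 by blast
      next
        case False
        then have "\<exists>a b. par R2 (ts ! i) a \<and> (a, b) \<in> conv C \<and> par R1 (us ! i) b" if "i < ?n" for i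
          using IH[OF that] that unfolding concl_def by blast
        then obtain A B where AB: "\<And>i. i < ?n \<Longrightarrow> par R2 (ts ! i) (A i) \<and> (A i, B i) \<in> conv C \<and> par R1 (us ! i) (B i)"
          by metis
        have "par R2 (Fun f ts) (Fun f (map A [0..<?n]))"
          by (rule par.par_fun) (use lts AB in auto)
        moreover have "(Fun f (map A [0..<?n]), Fun f (map B [0..<?n])) \<in> conv C"
          by (rule conv_args) (use AB in auto)
        moreover have "par R1 (Fun f us) (Fun f (map B [0..<?n]))"
          by (rule par.par_fun) (use lus AB in auto)
        ultimately show ?thesis unfolding concl_def using t2 u2 by blast
      qed
    qed
  qed
qed

end

theorem lemma10:
  fixes R R1 R2 C P :: "('f, 'v) trs"
  assumes "infinite (UNIV :: 'v set)"
    and "wf_trs R" and "left_linear R"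
    and "R1 \<subseteq> R" and "R2 \<subseteq> R" and "C \<subseteq> R"
    and "P = PCPS R C"
    and "\<forall>s t u. par_crit_peak R R s t u \<longrightarrow> (t, u) \<in> join R"
    and "(s, t) \<in> par_step R1" and "(s, u) \<in> par_step R2"
  shows "(t, u) \<in> par_step R2 O conv C O (par_step R1)\<inverse> \<or>
         (\<exists>t' u'. (t', t) \<in> par_step R1 \<and> (s, t') \<in> rstep P \<and> (s, u') \<in> rstep P \<and>
                  (u', u) \<in> par_step R2 \<and> (t', u') \<in> join R)"
proof -
  have "concl R R1 R2 C P s t u"
    using main[OF assms(1-5,7,8)] assms(9,10) by (simp add: par_step_eq)
  then show ?thesis unfolding concl_def par_step_eq[symmetric] by blast
qed


end
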